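(* Let $V=\{0,\tfrac12,1\}$ and consider languages with a constant expressive semantics whose consequence relation is induced by one of the five intersective mixed consequence truth-relations $ss=\models_{\{1\},\{1\}}$, $tt=\models_{\{1,\frac12\},\{1,\frac12\}}$, $st=\models_{\{1\},\{1,\frac12\}}$, $ts=\models_{\{1,\frac12\},\{1\}}$, and $ss\cap tt$. Each of these five relations admits a G-disjunction and a G-conjunction. Each of $ss$, $tt$, $st$, $ts$ admits a G-negation and a G-conditional, whereas $ss\cap tt$ admits neither a G-negation nor a G-conditional.
   Context: $\models_{\mathcal{D}_p,\mathcal{D}_c}$ holds between $\gamma,\delta\subseteq V$ iff ($\gamma\subseteq\mathcal{D}_p\Rightarrow\delta\cap\mathcal{D}_c\neq\emptyset$). A semantics: set of valuations mapping atoms to $V$, interpreting each connective by a fixed truth function, extended compositionally, with every assignment of values to finitely many distinct atoms realized; constant expressive: every $\alpha\in V$ is the constant value of some formula. Induced consequence: $\Gamma\vdash\Delta$ iff $v(\Gamma)\models v(\Delta)$ for all valuations $v$; write $\Gamma,A$ for $\Gamma\cup\{A\}$. A relation admits a G-connective if some truth function, assigned to a connective, makes it satisfy, for all sets $\Gamma,\Delta$ and formulas $A,B$: G-conjunction: $\Gamma,A\wedge B\vdash\Delta$ iff $\Gamma,A,B\vdash\Delta$; $\Gamma\vdash A\wedge B,\Delta$ iff ($\Gamma\vdash A,\Delta$ and $\Gamma\vdash B,\Delta$). G-disjunction: $\Gamma\vdash A\vee B,\Delta$ iff $\Gamma\vdash A,B,\Delta$; $\Gamma,A\vee B\vdash\Delta$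 iff ($\Gamma,A\vdash\Delta$ and $\Gamma,B\vdash\Delta$). G-negation: $\Gamma,\neg A\vdash\Delta$ iff $\Gamma\vdash A,\Delta$; $\Gamma\vdash\neg A,\Delta$ iff $\Gamma,A\vdash\Delta$. G-conditional: $\Gamma\vdash A\to B,\Delta$ iff $\Gamma,A\vdash B,\Delta$; $\Gamma,A\to B\vdash\Delta$ iff ($\Gamma\vdash A,\Delta$ and $\Gamma,B\vdash\Delta$). *)

theory Defs
  imports Main
begin

(* Truth values V = {0, 1/2, 1}:  V0 = 0,  Vh = 1/2,  V1 = 1 *)
datatype tv = V0 | Vh | V1

datatype 'c fm = Atom nat | Op 'c "'c fm list"

fun wf :: "('c \<Rightarrow> nat) \<Rightarrow> 'c fm \<Rightarrow> bool" where
  "wf ar (Atom n) = True"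
| "wf ar (Op c As) = (length As = ar c \<and> list_all (wf ar) As)"

fun eval :: "('c \<Rightarrow> tv list \<Rightarrow> tv) \<Rightarrow> (nat \<Rightarrow> tv) \<Rightarrow> 'c fm \<Rightarrow> tv" where
  "eval I v (Atom n) = v n"
| "eval I v (Op c As) = I c (map (eval I v) As)"

definition realizes_finite :: "(nat \<Rightarrow> tv) set \<Rightarrow> bool" where
  "realizes_finite S \<longleftrightarrow> (\<forall>X a. finite X \<longrightarrow> (\<exists>v\<in>S. \<forall>n\<in>X. v n = a n))"

definition const_expressive ::
  "('c \<Rightarrow> nat) \<Rightarrow> ('c \<Rightarrow> tv list \<Rightarrow> tv) \<Rightarrow> (nat \<Rightarrow> tv) set \<Rightarrow> bool" where
  "const_expressive ar I S \<longleftrightarrow> (\<forall>\<alpha>. \<exists>A. wf ar A \<and> (\<forall>v\<in>S. eval I v A = \<alpha>))"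

definition mixed :: "tv set \<Rightarrow> tv set \<Rightarrow> tv set \<Rightarrow> tv set \<Rightarrow> bool" where
  "mixed Dp Dc \<gamma> \<delta> \<longleftrightarrow> (\<gamma> \<subseteq> Dp \<longrightarrow> \<delta> \<inter> Dc \<noteq> {})"

definition ss :: "tv set \<Rightarrow> tv set \<Rightarrow> bool" where "ss = mixed {V1} {V1}"
definition tt :: "tv set \<Rightarrow> tv set \<Rightarrow> bool" where "tt = mixed {V1, Vh} {V1, Vh}"
definition st :: "tv set \<Rightarrow> tv set \<Rightarrow> bool" where "st = mixed {V1} {V1, Vh}"
definition ts :: "tv set \<Rightarrow> tv set \<Rightarrow> bool" where "ts = mixed {V1, Vh} {V1}"
definition sstt :: "tv set \<Rightarrow> tv set \<Rightarrow> bool" where "sstt \<gamma> \<delta> \<longleftrightarrow> ss \<gamma> \<delta> \<and> tt \<gamma> \<delta>"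

definition cons ::
  "(tv set \<Rightarrow> tv set \<Rightarrow> bool) \<Rightarrow> ('c \<Rightarrow> tv list \<Rightarrow> tv) \<Rightarrow> (nat \<Rightarrow> tv) set
   \<Rightarrow> 'c fm set \<Rightarrow> 'c fm set \<Rightarrow> bool" where
  "cons R I S \<Gamma> \<Delta> \<longleftrightarrow> (\<forall>v\<in>S. R (eval I v ` \<Gamma>) (eval I v ` \<Delta>))"

(* extension of the language by one new connective (None) of arity k with truth function g *)
definition ext_ar :: "('c \<Rightarrow> nat) \<Rightarrow> nat \<Rightarrow> 'c option \<Rightarrow> nat" where
  "ext_ar ar k o' = (case o' of None \<Rightarrow> k | Some c \<Rightarrow> ar c)"

definition ext_I :: "('c \<Rightarrow> tv list \<Rightarrow> tv) \<Rightarrow> (tv list \<Rightarrow> tv) \<Rightarrow> 'c option \<Rightarrow> tv list \<Rightarrow> tv" where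
  "ext_I I g o' = (case o' of None \<Rightarrow> g | Some c \<Rightarrow> I c)"

definition G_conj :: "'a set \<Rightarrow> ('a set \<Rightarrow> 'a set \<Rightarrow> bool) \<Rightarrow> ('a \<Rightarrow> 'a \<Rightarrow> 'a) \<Rightarrow> bool" where
  "G_conj W Cn cj \<longleftrightarrow> (\<forall>\<Gamma> \<Delta> A B. \<Gamma> \<subseteq> W \<longrightarrow> \<Delta> \<subseteq> W \<longrightarrow> A \<in> W \<longrightarrow> B \<in> W \<longrightarrow>
     (Cn (insert (cj A B) \<Gamma>) \<Delta> \<longleftrightarrow> Cn (insert A (insert B \<Gamma>)) \<Delta>) \<and>
     (Cn \<Gamma> (insert (cj A B) \<Delta>) \<longleftrightarrow> Cn \<Gamma> (insert A \<Delta>) \<and> Cn \<Gamma> (insert B \<Delta>)))"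

definition G_disj :: "'a set \<Rightarrow> ('a set \<Rightarrow> 'a set \<Rightarrow> bool) \<Rightarrow> ('a \<Rightarrow> 'a \<Rightarrow> 'a) \<Rightarrow> bool" where
  "G_disj W Cn dj \<longleftrightarrow> (\<forall>\<Gamma> \<Delta> A B. \<Gamma> \<subseteq> W \<longrightarrow> \<Delta> \<subseteq> W \<longrightarrow> A \<in> W \<longrightarrow> B \<in> W \<longrightarrow>
     (Cn \<Gamma> (insert (dj A B) \<Delta>) \<longleftrightarrow> Cn \<Gamma> (insert A (insert B \<Delta>))) \<and>
     (Cn (insert (dj A B) \<Gamma>) \<Delta> \<longleftrightarrow> Cn (insert A \<Gamma>) \<Delta> \<and> Cn (insert B \<Gamma>) \<Delta>))"

definition G_neg :: "'a set \<Rightarrow> ('a set \<Rightarrow> 'a set \<Rightarrow> bool) \<Rightarrow> ('a \<Rightarrow> 'a) \<Rightarrow> bool" where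
  "G_neg W Cn ng \<longleftrightarrow> (\<forall>\<Gamma> \<Delta> A. \<Gamma> \<subseteq> W \<longrightarrow> \<Delta> \<subseteq> W \<longrightarrow> A \<in> W \<longrightarrow>
     (Cn (insert (ng A) \<Gamma>) \<Delta> \<longleftrightarrow> Cn \<Gamma> (insert A \<Delta>)) \<and>
     (Cn \<Gamma> (insert (ng A) \<Delta>) \<longleftrightarrow> Cn (insert A \<Gamma>) \<Delta>))"

definition G_cond :: "'a set \<Rightarrow> ('a set \<Rightarrow> 'a set \<Rightarrow> bool) \<Rightarrow> ('a \<Rightarrow> 'a \<Rightarrow> 'a) \<Rightarrow> bool" where
  "G_cond W Cn im \<longleftrightarrow> (\<forall>\<Gamma> \<Delta> A B. \<Gamma> \<subseteq> W \<longrightarrow> \<Delta> \<subseteq> W \<longrightarrow> A \<in> W \<longrightarrow> B \<in> W \<longrightarrow>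
     (Cn \<Gamma> (insert (im A B) \<Delta>) \<longleftrightarrow> Cn (insert A \<Gamma>) (insert B \<Delta>)) \<and>
     (Cn (insert (im A B) \<Gamma>) \<Delta> \<longleftrightarrow> Cn \<Gamma> (insert A \<Delta>) \<and> Cn (insert B \<Gamma>) \<Delta>))"

(* "R admits a G-connective": some truth function, assigned to a new connective added to the
   language (ar, I, S), makes the induced consequence relation satisfy the G-rules *)
definition admits_conj where
  "admits_conj R ar I S \<longleftrightarrow> (\<exists>f :: tv \<Rightarrow> tv \<Rightarrow> tv.
     G_conj {A. wf (ext_ar ar 2) A} (cons R (ext_I I (\<lambda>xs. f (xs!0) (xs!1))) S) (\<lambda>A B. Op None [A, B]))"

definition admits_disj where
  "admits_disj R ar I S \<longleftrightarrow> (\<exists>f :: tv \<Rightarrow> tv \<Rightarrow> tv.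
     G_disj {A. wf (ext_ar ar 2) A} (cons R (ext_I I (\<lambda>xs. f (xs!0) (xs!1))) S) (\<lambda>A B. Op None [A, B]))"

definition admits_neg where
  "admits_neg R ar I S \<longleftrightarrow> (\<exists>f :: tv \<Rightarrow> tv.
     G_neg {A. wf (ext_ar ar 1) A} (cons R (ext_I I (\<lambda>xs. f (xs!0))) S) (\<lambda>A. Op None [A]))"

definition admits_cond where
  "admits_cond R ar I S \<longleftrightarrow> (\<exists>f :: tv \<Rightarrow> tv \<Rightarrow> tv.
     G_cond {A. wf (ext_ar ar 2) A} (cons R (ext_I I (\<lambda>xs. f (xs!0) (xs!1))) S) (\<lambda>A B. Op None [A, B]))"

end

theory Submission
  imports Defs
begin

lemma eval_emb: "eval (ext_I I g) v (map_fm Some A) = eval I v A"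
proof (induction A)
  case (Op c As)
  have "map (eval (ext_I I g) v \<circ> map_fm Some) As = map (eval I v) As"
    using Op by (intro map_cong) auto
  moreover have "ext_I I g (Some c) = I c" by (simp add: ext_I_def)
  ultimately show ?case by (simp only: fm.map eval.simps map_map)
qed simp

lemma wf_emb: "wf (ext_ar ar k) (map_fm Some A) = wf ar A"
  by (induction A) (auto simp: ext_ar_def list_all_iff)

definition pw_conj :: "(tv set \<Rightarrow> tv set \<Rightarrow> bool) \<Rightarrow> (tv \<Rightarrow> tv \<Rightarrow> tv) \<Rightarrow> bool" where
  "pw_conj R f \<longleftrightarrow> (\<forall>\<gamma> \<delta> a b. (R (insert (f a b) \<gamma>) \<delta> \<longleftrightarrow> R (insert a (insert b \<gamma>)) \<delta>)
     \<and> (R \<gamma> (insert (f a b) \<delta>) \<longleftrightarrow> R \<gamma> (insert a \<delta>) \<and> R \<gamma> (insert b \<delta>)))"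

definition pw_disj :: "(tv set \<Rightarrow> tv set \<Rightarrow> bool) \<Rightarrow> (tv \<Rightarrow> tv \<Rightarrow> tv) \<Rightarrow> bool" where
  "pw_disj R f \<longleftrightarrow> (\<forall>\<gamma> \<delta> a b. (R \<gamma> (insert (f a b) \<delta>) \<longleftrightarrow> R \<gamma> (insert a (insert b \<delta>)))
     \<and> (R (insert (f a b) \<gamma>) \<delta> \<longleftrightarrow> R (insert a \<gamma>) \<delta> \<and> R (insert b \<gamma>) \<delta>))"

definition pw_neg :: "(tv set \<Rightarrow> tv set \<Rightarrow> bool) \<Rightarrow> (tv \<Rightarrow> tv) \<Rightarrow> bool" where
  "pw_neg R f \<longleftrightarrow> (\<forall>\<gamma> \<delta> a. (R (insert (f a) \<gamma>) \<delta> \<longleftrightarrow> R \<gamma> (insert a \<delta>))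
     \<and> (R \<gamma> (insert (f a) \<delta>) \<longleftrightarrow> R (insert a \<gamma>) \<delta>))"

definition pw_cond :: "(tv set \<Rightarrow> tv set \<Rightarrow> bool) \<Rightarrow> (tv \<Rightarrow> tv \<Rightarrow> tv) \<Rightarrow> bool" where
  "pw_cond R f \<longleftrightarrow> (\<forall>\<gamma> \<delta> a b. (R \<gamma> (insert (f a b) \<delta>) \<longleftrightarrow> R (insert a \<gamma>) (insert b \<delta>))
     \<and> (R (insert (f a b) \<gamma>) \<delta> \<longleftrightarrow> R \<gamma> (insert a \<delta>) \<and> R (insert b \<gamma>) \<delta>))"

lemma eval_op2: "eval (ext_I I (\<lambda>xs. f (xs!0) (xs!1))) v (Op None [A, B])
   = f (eval (ext_I I (\<lambda>xs. f (xs!0) (xs!1))) v A) (eval (ext_I I (\<lambda>xs. f (xs!0) (xs!1))) v B)"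
  by (simp add: ext_I_def)

lemma eval_op1: "eval (ext_I I (\<lambda>xs. f (xs!0))) v (Op None [A])
   = f (eval (ext_I I (\<lambda>xs. f (xs!0))) v A)"
  by (simp add: ext_I_def)

lemma lift_conj: "pw_conj R f \<Longrightarrow> G_conj W (cons R (ext_I I (\<lambda>xs. f (xs!0) (xs!1))) S) (\<lambda>A B. Op None [A, B])"
  unfolding G_conj_def cons_def pw_conj_def eval_op2 image_insert by blast

lemma lift_disj: "pw_disj R f \<Longrightarrow> G_disj W (cons R (ext_I I (\<lambda>xs. f (xs!0) (xs!1))) S) (\<lambda>A B. Op None [A, B])"
  unfolding G_disj_def cons_def pw_disj_def eval_op2 image_insert by blast

lemma lift_cond: "pw_cond R f \<Longrightarrow> G_cond W (cons R (ext_I I (\<lambda>xs. f (xs!0) (xs!1))) S) (\<lambda>A B. Op None [A, B])"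
  unfolding G_cond_def cons_def pw_cond_def eval_op2 image_insert by blast

lemma lift_neg: "pw_neg R f \<Longrightarrow> G_neg W (cons R (ext_I I (\<lambda>xs. f (xs!0))) S) (\<lambda>A. Op None [A])"
  unfolding G_neg_def cons_def pw_neg_def eval_op1 image_insert by blast

lemma mixed_conj: "(\<And>a b. (f a b \<in> Dp \<longleftrightarrow> a \<in> Dp \<and> b \<in> Dp) \<and> (f a b \<in> Dc \<longleftrightarrow> a \<in> Dc \<and> b \<in> Dc))
  \<Longrightarrow> pw_conj (mixed Dp Dc) f"
  unfolding pw_conj_def mixed_def by blast

lemma mixed_disj: "(\<And>a b. (f a b \<in> Dp \<longleftrightarrow> a \<in> Dp \<or> b \<in> Dp) \<and> (f a b \<in> Dc \<longleftrightarrow> a \<in> Dc \<or> b \<in> Dc))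
  \<Longrightarrow> pw_disj (mixed Dp Dc) f"
  unfolding pw_disj_def mixed_def by blast

lemma mixed_neg: "(\<And>a. (f a \<in> Dp \<longleftrightarrow> a \<notin> Dc) \<and> (f a \<in> Dc \<longleftrightarrow> a \<notin> Dp))
  \<Longrightarrow> pw_neg (mixed Dp Dc) f"
  unfolding pw_neg_def mixed_def by blast

lemma mixed_cond: "(\<And>a b. (f a b \<in> Dc \<longleftrightarrow> (a \<in> Dp \<longrightarrow> b \<in> Dc)) \<and> (f a b \<in> Dp \<longleftrightarrow> (a \<notin> Dc \<or> b \<in> Dp)))
  \<Longrightarrow> pw_cond (mixed Dp Dc) f"
  unfolding pw_cond_def mixed_def by blast

lemma both_conj: "pw_conj R1 f \<Longrightarrow> pw_conj R2 f \<Longrightarrow> pw_conj (\<lambda>g d. R1 g d \<and> R2 g d) f"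
  unfolding pw_conj_def by blast

lemma both_disj: "pw_disj R1 f \<Longrightarrow> pw_disj R2 f \<Longrightarrow> pw_disj (\<lambda>g d. R1 g d \<and> R2 g d) f"
  unfolding pw_disj_def by blast

lemma sstt_eq: "sstt = (\<lambda>g d. ss g d \<and> tt g d)"
  by (rule ext, rule ext, simp add: sstt_def)

fun tmin :: "tv \<Rightarrow> tv \<Rightarrow> tv" where
  "tmin V0 _ = V0" | "tmin _ V0 = V0" | "tmin Vh _ = Vh" | "tmin _ Vh = Vh" | "tmin V1 V1 = V1"

fun tmax :: "tv \<Rightarrow> tv \<Rightarrow> tv" where
  "tmax V1 _ = V1" | "tmax _ V1 = V1" | "tmax Vh _ = Vh" | "tmax _ Vh = Vh" | "tmax V0 V0 = V0"

definition nss :: "tv \<Rightarrow> tv" where "nss a = (if a = V1 then V0 else V1)"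
definition ntt :: "tv \<Rightarrow> tv" where "ntt a = (if a = V0 then V1 else V0)"
definition nk :: "tv \<Rightarrow> tv" where "nk a = (if a = V0 then V1 else if a = V1 then V0 else Vh)"
definition css :: "tv \<Rightarrow> tv \<Rightarrow> tv" where "css a b = (if a \<noteq> V1 \<or> b = V1 then V1 else V0)"
definition ctt :: "tv \<Rightarrow> tv \<Rightarrow> tv" where "ctt a b = (if a = V0 \<or> b \<noteq> V0 then V1 else V0)"
definition ck :: "tv \<Rightarrow> tv \<Rightarrow> tv" where
  "ck a b = (if a = V0 \<or> b = V1 then V1 else if a \<noteq> V1 \<or> b \<noteq> V0 then Vh else V0)"

lemma conj_all: "R \<in> {ss, tt, st, ts, sstt} \<Longrightarrow> pw_conj R tmin"
proof -
  have g: "\<And>U. U = {V1} \<or> U = {V1, Vh} \<Longrightarrow> (tmin a b \<in> U \<longleftrightarrow> a \<in> U \<and> b \<in> U)" for a b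
    by (cases a; cases b; auto)
  have m: "\<And>Dp Dc. Dp = {V1} \<or> Dp = {V1, Vh} \<Longrightarrow> Dc = {V1} \<or> Dc = {V1, Vh} \<Longrightarrow> pw_conj (mixed Dp Dc) tmin"
    by (rule mixed_conj) (use g in blast)
  show "R \<in> {ss, tt, st, ts, sstt} \<Longrightarrow> pw_conj R tmin"
    using m unfolding ss_def tt_def st_def ts_def sstt_eq by (auto intro!: both_conj)
qed

lemma disj_all: "R \<in> {ss, tt, st, ts, sstt} \<Longrightarrow> pw_disj R tmax"
proof -
  have g: "\<And>U. U = {V1} \<or> U = {V1, Vh} \<Longrightarrow> (tmax a b \<in> U \<longleftrightarrow> a \<in> U \<or> b \<in> U)" for a b
    by (cases a; cases b; auto)
  have m: "\<And>Dp Dc. Dp = {V1} \<or> Dp = {V1, Vh} \<Longrightarrow> Dc = {V1} \<or> Dc = {V1, Vh} \<Longrightarrow> pw_disj (mixed Dp Dc) tmax"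
    by (rule mixed_disj) (use g in blast)
  show "R \<in> {ss, tt, st, ts, sstt} \<Longrightarrow> pw_disj R tmax"
    using m unfolding ss_def tt_def st_def ts_def sstt_eq by (auto intro!: both_disj)
qed

lemma neg_ss: "pw_neg ss nss" unfolding ss_def
  apply (rule mixed_neg) subgoal for a by (cases a; simp add: nss_def) done
lemma neg_tt: "pw_neg tt ntt" unfolding tt_def
  apply (rule mixed_neg) subgoal for a by (cases a; simp add: ntt_def) done
lemma neg_st: "pw_neg st nk" unfolding st_def
  apply (rule mixed_neg) subgoal for a by (cases a; simp add: nk_def) done
lemma neg_ts: "pw_neg ts nk" unfolding ts_def
  apply (rule mixed_neg) subgoal for a by (cases a; simp add: nk_def) done
lemma cond_ss: "pw_cond ss css" unfolding ss_def
  apply (rule mixed_cond) subgoal for a b by (cases a; cases b; simp add: css_def) done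
lemma cond_tt: "pw_cond tt ctt" unfolding tt_def
  apply (rule mixed_cond) subgoal for a b by (cases a; cases b; simp add: ctt_def) done
lemma cond_st: "pw_cond st ck" unfolding st_def
  apply (rule mixed_cond) subgoal for a b by (cases a; cases b; simp add: ck_def) done
lemma cond_ts: "pw_cond ts ck" unfolding ts_def
  apply (rule mixed_cond) subgoal for a b by (cases a; cases b; simp add: ck_def) done

lemma pos_part:
  "(\<forall>R\<in>{ss, tt, st, ts, sstt}. admits_disj R ar I S \<and> admits_conj R ar I S)
   \<and> (\<forall>R\<in>{ss, tt, st, ts}. admits_neg R ar I S \<and> admits_cond R ar I S)"
proof (intro conjI ballI)
  fix R assume "R \<in> {ss, tt, st, ts, sstt}"
  then show "admits_disj R ar I S" "admits_conj R ar I S"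
    unfolding admits_disj_def admits_conj_def
    using lift_disj[OF disj_all] lift_conj[OF conj_all] by blast+
next
  fix R assume "R \<in> {ss, tt, st, ts}"
  then show "admits_neg R ar I S"
    unfolding admits_neg_def
    using lift_neg[OF neg_ss] lift_neg[OF neg_tt] lift_neg[OF neg_st] lift_neg[OF neg_ts] by blast
  show "admits_cond R ar I S" using \<open>R \<in> _\<close>
    unfolding admits_cond_def
    using lift_cond[OF cond_ss] lift_cond[OF cond_tt] lift_cond[OF cond_st] lift_cond[OF cond_ts] by blast
qed

lemma get_const:
  assumes "const_expressive ar I S"
  obtains C where "wf (ext_ar ar k) C" "\<And>v. v \<in> S \<Longrightarrow> eval (ext_I I g) v C = \<alpha>"
proof -
  obtain A where "wf ar A" "\<forall>v\<in>S. eval I v A = \<alpha>"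
    using assms unfolding const_expressive_def by blast
  then show ?thesis
    using that[of "map_fm Some A"] by (simp add: wf_emb eval_emb)
qed

lemma S_ne: "realizes_finite S \<Longrightarrow> \<exists>v. v \<in> S"
  unfolding realizes_finite_def by (metis finite.emptyI)

lemma no_neg:
  assumes "realizes_finite S" "const_expressive ar I S"
  shows "\<not> admits_neg sstt ar I S"
proof
  assume "admits_neg sstt ar I S"
  then obtain f where G: "G_neg {A. wf (ext_ar ar 1) A} (cons sstt (ext_I I (\<lambda>xs. f (xs!0))) S) (\<lambda>A. Op None [A])"
    unfolding admits_neg_def by blast
  obtain C where C: "wf (ext_ar ar 1) C" "\<And>v. v \<in> S \<Longrightarrow> eval (ext_I I (\<lambda>xs. f (xs!0))) v C = Vh"
    using get_const[OF assms(2)] by blast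
  obtain v0 where v0: "v0 \<in> S" using S_ne[OF assms(1)] by blast
  have 1: "cons sstt (ext_I I (\<lambda>xs. f (xs!0))) S {Op None [C]} {C} \<longleftrightarrow> cons sstt (ext_I I (\<lambda>xs. f (xs!0))) S {} {C, C}"
    using G C(1) unfolding G_neg_def by blast
  have 2: "cons sstt (ext_I I (\<lambda>xs. f (xs!0))) S {} {Op None [C]} \<longleftrightarrow> cons sstt (ext_I I (\<lambda>xs. f (xs!0))) S {C} {}"
    using G C(1) unfolding G_neg_def by blast
  have e: "\<And>v. v \<in> S \<Longrightarrow> eval (ext_I I (\<lambda>xs. f (xs!0))) v (Op None [C]) = f Vh"
    by (simp only: eval_op1 C(2))
  have a: "sstt {f Vh} {Vh} = sstt {} {Vh}"
    using 1 v0 C(2) e unfolding cons_def by auto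
  have b: "sstt {} {f Vh} = sstt {Vh} {}"
    using 2 v0 C(2) e unfolding cons_def by auto
  show False using a b
    by (cases "f Vh") (auto simp: sstt_def ss_def tt_def mixed_def)
qed

lemma no_cond:
  assumes "realizes_finite S" "const_expressive ar I S"
  shows "\<not> admits_cond sstt ar I S"
proof
  assume "admits_cond sstt ar I S"
  then obtain f where G: "G_cond {A. wf (ext_ar ar 2) A} (cons sstt (ext_I I (\<lambda>xs. f (xs!0) (xs!1))) S) (\<lambda>A B. Op None [A, B])"
    unfolding admits_cond_def by blast
  obtain C where C: "wf (ext_ar ar 2) C" "\<And>v. v \<in> S \<Longrightarrow> eval (ext_I I (\<lambda>xs. f (xs!0) (xs!1))) v C = Vh"
    using get_const[OF assms(2)] by blast
  obtain Z where Z: "wf (ext_ar ar 2) Z" "\<And>v. v \<in> S \<Longrightarrow> eval (ext_I I (\<lambda>xs. f (xs!0) (xs!1))) v Z = V0"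
    using get_const[OF assms(2)] by blast
  obtain v0 where v0: "v0 \<in> S" using S_ne[OF assms(1)] by blast
  have 1: "cons sstt (ext_I I (\<lambda>xs. f (xs!0) (xs!1))) S {Op None [C, Z]} {C} \<longleftrightarrow>
     cons sstt (ext_I I (\<lambda>xs. f (xs!0) (xs!1))) S {} {C, C} \<and> cons sstt (ext_I I (\<lambda>xs. f (xs!0) (xs!1))) S {Z} {C}"
    using G C(1) Z(1) unfolding G_cond_def by blast
  have 2: "cons sstt (ext_I I (\<lambda>xs. f (xs!0) (xs!1))) S {} {Op None [C, Z]} \<longleftrightarrow>
     cons sstt (ext_I I (\<lambda>xs. f (xs!0) (xs!1))) S {C} {Z}"
    using G C(1) Z(1) unfolding G_cond_def by blast
  have e: "\<And>v. v \<in> S \<Longrightarrow> eval (ext_I I (\<lambda>xs. f (xs!0) (xs!1))) v (Op None [C, Z]) = f Vh V0"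
    by (simp only: eval_op2 C(2) Z(2))
  have a: "sstt {f Vh V0} {Vh} = (sstt {} {Vh} \<and> sstt {V0} {Vh})"
    using 1 v0 C(2) Z(2) e unfolding cons_def by auto
  have b: "sstt {} {f Vh V0} = sstt {Vh} {V0}"
    using 2 v0 C(2) Z(2) e unfolding cons_def by auto
  show False using a b
    by (cases "f Vh V0") (auto simp: sstt_def ss_def tt_def mixed_def)
qed

theorem theorem4p1:
  fixes ar :: "'c \<Rightarrow> nat" and I :: "'c \<Rightarrow> tv list \<Rightarrow> tv" and S :: "(nat \<Rightarrow> tv) set"
  assumes "realizes_finite S" and "const_expressive ar I S"
  shows "(\<forall>R\<in>{ss, tt, st, ts, sstt}. admits_disj R ar I S \<and> admits_conj R ar I S)
       \<and> (\<forall>R\<in>{ss, tt, st, ts}. admits_neg R ar I S \<and> admits_cond R ar I S)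
       \<and> \<not> admits_neg sstt ar I S \<and> \<not> admits_cond sstt ar I S"
  using pos_part no_neg[OF assms] no_cond[OF assms] by blast

end
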